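(* Let $1\le d<k$ and let $\mathcal{L}\subset\mathbb{R}^k=\mathbb{R}^d\times\mathbb{R}^{k-d}$ be a lattice such that the projection $\pi\colon\mathbb{R}^k\to\mathbb{R}^d$ is injective on $\mathcal{L}$ and $\pi_{\mathrm{int}}(\mathcal{L})$ is dense in $H=\mathbb{R}^{k-d}$. Let $(A_i)_{i\in\mathbb{N}}$ be a sequence of relatively compact, measurable subsets of $H$ with non-empty interiors and boundaries of Lebesgue measure $0$, such that $A_{i+1}\subseteq A_i$ for all $i\ge1$ and $\lim_{i\to\infty}\mathrm{vol}(A_i)=0$. Then there exists a sequence $(R_i)_{i\in\mathbb{N}}$ of real numbers such that, for all $i\ge1$ and all $R\ge R_i$, $$\#\{\lambda\in L: |\lambda|\le R\text{ and }\lambda^\star\in A_i\}\le 2^{d+1}\,\mathrm{dens}(\mathcal{L})\,\mathrm{vol}(A_i)\,R^d.$$ Further, if $(T_j)_{j\in\mathbb{N}}$ is any sequence of real numbers tending to $\infty$, then $$\#\{\lambda\in L: |\lambda|\le T_j\text{ and }\lambda^\star\in A_j\}=o(T_j^d)\quad\text{as } j\to\infty.$$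
   Context: $\pi_{\mathrm{int}}$ is the projection of $\mathbb{R}^k$ onto its last $k-d$ coordinates; $L=\pi(\mathcal{L})$ and $\lambda^\star=\pi_{\mathrm{int}}(\pi^{-1}(\lambda)\cap\mathcal{L})$ for $\lambda\in L$. $|\lambda|$ denotes the sup-norm of $\lambda\in\mathbb{R}^d$. $\mathrm{dens}(\mathcal{L})$ is the reciprocal of the volume of a fundamental domain of $\mathcal{L}$. *)

theory Defs
  imports "HOL-Analysis.Analysis" "HOL-Library.Landau_Symbols"
begin

definition is_lattice :: "'a::euclidean_space set \<Rightarrow> bool" where
  "is_lattice \<Lambda> \<longleftrightarrow> (\<exists>B. independent B \<and> card B = DIM('a) \<and>
      \<Lambda> = {(\<Sum>b\<in>B. of_int (c b) *\<^sub>R b) | c. True})"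

definition fund_par :: "'a::euclidean_space set \<Rightarrow> 'a set" where
  "fund_par B = {(\<Sum>b\<in>B. t b *\<^sub>R b) | t. \<forall>b\<in>B. 0 \<le> t b \<and> t b < 1}"

definition lattice_dens :: "'a::euclidean_space set \<Rightarrow> real" where
  "lattice_dens \<Lambda> = 1 / measure lborel (fund_par (SOME B. independent B \<and> card B = DIM('a) \<and>
      \<Lambda> = {(\<Sum>b\<in>B. of_int (c b) *\<^sub>R b) | c. True}))"

text \<open>The star map: for \<lambda> in L = \<pi>(\<L>), \<lambda>* = \<pi>_int(\<pi>^{-1}(\<lambda>) \<inter> \<L>).\<close>
definition star_map :: "('a \<times> 'b) set \<Rightarrow> 'a \<Rightarrow> 'b" where
  "star_map \<L> l = snd (THE x. x \<in> \<L> \<and> fst x = l)"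

end

theory Submission
  imports Defs
begin

lemma fund_par_props:
  fixes B :: "'a::euclidean_space set"
  assumes ind: "independent B" and cB: "card B = DIM('a)"
  shows "fund_par B \<in> lmeasurable" "measure lebesgue (fund_par B) > 0" "bounded (fund_par B)"
    "fund_par B \<in> sets borel"
proof -
  have fB: "finite B" using independent_bound[OF ind] by blast
  obtain e :: "'a \<Rightarrow> 'a" where e: "bij_betw e (Basis::'a set) B"
    using finite_same_card_bij[of "Basis::'a set" B] fB cB by auto
  define f where "f x = (\<Sum>i\<in>Basis. (x \<bullet> i) *\<^sub>R e i)" for x :: 'a
  have lin: "linear f" unfolding f_def
    by (auto intro!: linearI simp: inner_add_left scaleR_add_left sum.distrib scaleR_sum_right inner_scaleR_left)
  have fsum: "f x = (\<Sum>b\<in>B. (x \<bullet> inv_into Basis e b) *\<^sub>R b)" for x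
  proof -
    have "(\<Sum>b\<in>B. (x \<bullet> inv_into Basis e b) *\<^sub>R b) = (\<Sum>i\<in>Basis. (x \<bullet> inv_into Basis e (e i)) *\<^sub>R e i)"
      using sum.reindex_bij_betw[OF e, of "\<lambda>b. (x \<bullet> inv_into Basis e b) *\<^sub>R b"] by simp
    also have "\<dots> = f x" unfolding f_def
      using e by (intro sum.cong) (auto simp: bij_betw_def)
    finally show ?thesis by simp
  qed
  have injf: "inj f"
  proof (rule linear_injective_0[OF lin, THEN iffD2], intro allI impI)
    fix x assume "f x = 0"
    hence "(\<Sum>b\<in>B. (x \<bullet> inv_into Basis e b) *\<^sub>R b) = 0" by (simp add: fsum)
    hence s0: "(\<Sum>b\<in>B. (\<lambda>b. x \<bullet> inv_into Basis e b) b *\<^sub>R b) = 0" by simp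
    have z: "\<forall>b\<in>B. x \<bullet> inv_into Basis e b = 0"
    proof (rule ccontr)
      assume "\<not> ?thesis"
      then have "\<exists>v\<in>B. (\<lambda>b. x \<bullet> inv_into Basis e b) v \<noteq> 0" by auto
      with s0 have "\<exists>u. (\<exists>v\<in>B. u v \<noteq> 0) \<and> (\<Sum>v\<in>B. u v *\<^sub>R v) = 0"
        by (intro exI[of _ "\<lambda>b. x \<bullet> inv_into Basis e b"]) simp
      then show False using ind dependent_finite[OF fB] by simp
    qed
    have "\<forall>i\<in>Basis. x \<bullet> i = 0"
    proof
      fix i :: 'a assume i: "i \<in> Basis"
      then have "e i \<in> B" using e bij_betwE by blast
      moreover have "inv_into Basis e (e i) = i" using e i bij_betw_inv_into_left by fast
      ultimately show "x \<bullet> i = 0" using z by metis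
    qed
    then show "x = 0" using euclidean_all_zero_iff by blast
  qed
  have surjf: "surj f" using lin injf by (simp add: eucl.linear_injective_imp_surjective)
  define Q where "Q = {x::'a. \<forall>i\<in>Basis. 0 \<le> x\<bullet>i \<and> x\<bullet>i < 1}"
  have QB: "Q \<in> sets borel" unfolding Q_def by measurable
  have FQ: "fund_par B = f ` Q"
  proof
    show "f ` Q \<subseteq> fund_par B"
    proof
      fix z assume "z \<in> f ` Q"
      then obtain x where x: "x \<in> Q" "z = f x" by auto
      have "inv_into Basis e b \<in> Basis" if "b \<in> B" for b
        using e that by (metis bij_betw_imp_surj_on inv_into_into)
      then show "z \<in> fund_par B" unfolding fund_par_def using x
        by (auto simp: fsum Q_def intro!: exI[of _ "\<lambda>b. x \<bullet> inv_into Basis e b"])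
    qed
  next
    show "fund_par B \<subseteq> f ` Q"
    proof
      fix z assume "z \<in> fund_par B"
      then obtain t where t: "z = (\<Sum>b\<in>B. t b *\<^sub>R b)" "\<forall>b\<in>B. 0 \<le> t b \<and> t b < 1"
        unfolding fund_par_def by auto
      define x where "x = (\<Sum>i\<in>Basis. t (e i) *\<^sub>R i)"
      have xi: "x \<bullet> i = t (e i)" if "i \<in> Basis" for i
        unfolding x_def using that by (simp add: inner_sum_left inner_Basis if_distrib cong: if_cong)
      have "x \<in> Q" unfolding Q_def using xi t(2) e by (auto simp: bij_betw_def)
      moreover have "f x = z"
      proof -
        have "f x = (\<Sum>i\<in>Basis. t (e i) *\<^sub>R e i)" unfolding f_def by (intro sum.cong) (auto simp: xi)
        also have "\<dots> = (\<Sum>b\<in>B. t b *\<^sub>R b)"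
          using sum.reindex_bij_betw[OF e, of "\<lambda>b. t b *\<^sub>R b"] by simp
        finally show ?thesis using t by simp
      qed
      ultimately show "z \<in> f ` Q" by blast
    qed
  qed
  obtain g where g: "linear g" "g \<circ> f = id" using linear_injective_left_inverse[OF lin injf] by blast
  have "f ` Q = g -` Q"
  proof
    show "f ` Q \<subseteq> g -` Q" using g(2) by (auto simp: fun_eq_iff)
    show "g -` Q \<subseteq> f ` Q"
    proof
      fix y assume y: "y \<in> g -` Q"
      obtain x where x: "y = f x" using surjf by blast
      then have "g y = x" using g(2) by (simp add: fun_eq_iff)
      then show "y \<in> f ` Q" using x y by auto
    qed
  qed
  moreover have "g \<in> borel_measurable borel"
    using g(1) by (intro borel_measurable_continuous_onI linear_continuous_on) (simp add: linear_linear)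
  ultimately show "fund_par B \<in> sets borel" unfolding FQ using QB measurable_sets_borel by metis
  have Qsub: "Q \<subseteq> cbox 0 One" unfolding Q_def by (auto simp: mem_box less_imp_le)
  show bd: "bounded (fund_par B)" unfolding FQ
  proof -
    have "compact (f ` cbox 0 One)"
      by (rule compact_continuous_image) (auto intro!: linear_continuous_on simp: lin linear_linear)
    then show "bounded (f ` Q)" using Qsub
      by (meson bounded_subset compact_imp_bounded image_mono)
  qed
  have meas: "fund_par B \<in> sets lebesgue" unfolding FQ
  proof (rule differentiable_image_in_sets_lebesgue)
    show "Q \<in> sets lebesgue" using QB by (simp add: lborelD sets_completionI_sets)
    show "f differentiable_on Q" using lin
      by (simp add: linear_imp_differentiable differentiable_at_imp_differentiable_on)
  qed simp
  show lm: "fund_par B \<in> lmeasurable" using bd meas bounded_set_imp_lmeasurable by blast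
  have bij: "bij f" using injf surjf by (simp add: bij_def)
  have op: "open (f ` box 0 One)" using open_bijective_linear_image_eq[OF lin bij] by (simp add: open_box)
  have sub: "f ` box 0 One \<subseteq> fund_par B" unfolding FQ by (intro image_mono) (auto simp: Q_def mem_box less_imp_le)
  have "(1/2) *\<^sub>R One \<in> box (0::'a) One" by (auto simp: mem_box)
  then have ne: "f ((1/2) *\<^sub>R One) \<in> f ` box 0 One" by blast
  obtain r where r: "r > 0" "ball (f ((1/2) *\<^sub>R One)) r \<subseteq> f ` box 0 One"
    using op ne open_contains_ball by blast
  have "0 < measure lborel (ball (f ((1/2) *\<^sub>R One)) r)" using r content_ball_pos by blast
  also have "measure lborel (ball (f ((1/2) *\<^sub>R One)) r) = measure lebesgue (ball (f ((1/2) *\<^sub>R One)) r)"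
    by (simp add: measure_completion)
  also have "\<dots> \<le> measure lebesgue (fund_par B)"
    using r sub lm by (intro measure_mono_fmeasurable) auto
  finally show "measure lebesgue (fund_par B) > 0" .
qed

definition latt :: "'a::euclidean_space set \<Rightarrow> 'a set" where
  "latt B = {(\<Sum>b\<in>B. of_int (c b) *\<^sub>R b) | c. True}"

lemma latt_diff:
  assumes "x \<in> latt B" "y \<in> latt B" shows "x - y \<in> latt B"
proof -
  obtain c c' where "x = (\<Sum>b\<in>B. of_int (c b) *\<^sub>R b)" "y = (\<Sum>b\<in>B. of_int (c' b) *\<^sub>R b)"
    using assms unfolding latt_def by auto
  then have "x - y = (\<Sum>b\<in>B. of_int (c b - c' b) *\<^sub>R b)"
    by (simp add: sum_subtractf scaleR_diff_left)
  then show ?thesis unfolding latt_def by (auto intro!: exI[of _ "\<lambda>b. c b - c' b"])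
qed

lemma fund_par_unique:
  fixes B :: "'a::euclidean_space set"
  assumes ind: "independent B" and z: "z \<in> fund_par B" and z': "z' \<in> fund_par B"
    and d: "z - z' \<in> latt B"
  shows "z = z'"
proof -
  have fB: "finite B" using independent_bound[OF ind] by blast
  obtain t where t: "z = (\<Sum>b\<in>B. t b *\<^sub>R b)" "\<forall>b\<in>B. 0 \<le> t b \<and> t b < 1"
    using z unfolding fund_par_def by auto
  obtain t' where t': "z' = (\<Sum>b\<in>B. t' b *\<^sub>R b)" "\<forall>b\<in>B. 0 \<le> t' b \<and> t' b < 1"
    using z' unfolding fund_par_def by auto
  obtain c where c: "z - z' = (\<Sum>b\<in>B. of_int (c b) *\<^sub>R b)"
    using d unfolding latt_def by auto
  have s0: "(\<Sum>b\<in>B. (\<lambda>b. t b - t' b - of_int (c b)) b *\<^sub>R b) = 0"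
    using c t(1) t'(1) by (simp add: sum_subtractf scaleR_diff_left)
  have co: "\<forall>b\<in>B. t b - t' b - of_int (c b) = 0"
  proof (rule ccontr)
    assume "\<not> ?thesis"
    then have "\<exists>v\<in>B. (\<lambda>b. t b - t' b - of_int (c b)) v \<noteq> 0" by auto
    with s0 have "\<exists>u. (\<exists>v\<in>B. u v \<noteq> 0) \<and> (\<Sum>v\<in>B. u v *\<^sub>R v) = 0"
      by (intro exI[of _ "\<lambda>b. t b - t' b - of_int (c b)"]) simp
    then show False using ind dependent_finite[OF fB] by simp
  qed
  have "t b = t' b" if b: "b \<in> B" for b
  proof -
    have e: "t b - t' b = of_int (c b)" using co b by auto
    have "of_int (c b) < (1::real)" "of_int (c b) > (-1::real)" using e t(2) t'(2) b by force+
    then have "c b = 0" by linarith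
    then show ?thesis using e by simp
  qed
  then show ?thesis using t(1) t'(1) by (auto intro: sum.cong)
qed

lemma measure_times_borel:
  fixes X :: "'a::euclidean_space set" and Y :: "'b::euclidean_space set"
  assumes "X \<in> sets borel" "Y \<in> sets borel" "emeasure lborel X < \<infinity>" "emeasure lborel Y < \<infinity>"
  shows "measure lebesgue (X \<times> Y) = measure lebesgue X * measure lebesgue Y"
proof -
  have XY: "X \<times> Y \<in> sets borel" using assms(1,2)
    by (metis borel_prod pair_measureI)
  have "emeasure lborel (X \<times> Y) = emeasure (lborel \<Otimes>\<^sub>M lborel) (X \<times> Y)" by (simp add: lborel_prod)
  also have "\<dots> = emeasure lborel X * emeasure lborel Y"
    using assms by (intro lborel.emeasure_pair_measure_Times) auto
  finally have "measure lborel (X \<times> Y) = measure lborel X * measure lborel Y"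
    using assms by (simp add: measure_def enn2real_mult)
  then show ?thesis using assms XY by (simp add: measure_completion)
qed

lemma star_count:
  fixes L :: "('a \<times> 'b) set"
  assumes inj: "inj_on fst L"
  shows "card {l \<in> fst ` L. P l \<and> star_map L l \<in> W} = card {v \<in> L. P (fst v) \<and> snd v \<in> W}"
proof -
  have st: "star_map L (fst v) = snd v" if "v \<in> L" for v
  proof -
    have "(THE x. x \<in> L \<and> fst x = fst v) = v"
      using that inj by (intro the_equality) (auto dest: inj_onD)
    then show ?thesis unfolding star_map_def by simp
  qed
  have "{l \<in> fst ` L. P l \<and> star_map L l \<in> W} = fst ` {v \<in> L. P (fst v) \<and> snd v \<in> W}"
    using st by force
  moreover have "inj_on fst {v \<in> L. P (fst v) \<and> snd v \<in> W}"
    using inj by (rule inj_on_subset) auto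
  ultimately show ?thesis by (simp add: card_image)
qed

lemma packing:
  fixes B :: "((real^'d::finite) \<times> (real^'h::finite)) set" and A :: "(real^'h) set"
  assumes ind: "independent B" and cB: "card B = DIM((real^'d) \<times> (real^'h))"
    and dense: "closure (snd ` latt B) = UNIV"
    and bA: "bounded A" and dpos: "\<delta> > 0"
  obtains \<rho> where "\<rho> \<ge> 0" "\<And>R S. R \<ge> 0 \<Longrightarrow> finite S \<Longrightarrow>
      S \<subseteq> {v \<in> latt B. infnorm (fst v) \<le> R \<and> snd v \<in> A} \<Longrightarrow>
      real (card S) * measure lebesgue (fund_par B)
        \<le> (2*(R+\<rho>))^CARD('d) * measure lebesgue (\<Union>a\<in>A. ball a \<delta>)"
proof -
  define F0 where "F0 = fund_par B"
  note F0props = fund_par_props[OF ind cB, folded F0_def]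
  obtain r where r: "r > 0" "\<And>z. z \<in> F0 \<Longrightarrow> norm z \<le> r"
    using F0props(3) bounded_pos by blast
  define K where "K = closure (snd ` F0)"
  have "bounded (snd ` F0)"
    using F0props(3) by (rule bounded_linear_image) (rule bounded_linear_snd)
  then have cK: "compact K" unfolding K_def using compact_closure by blast
  have cov: "K \<subseteq> \<Union> ((\<lambda>u. ball (snd u) \<delta>) ` latt B)"
  proof
    fix y assume "y \<in> K"
    have "y \<in> closure (snd ` latt B)" using dense by simp
    then obtain w where "w \<in> snd ` latt B" "dist w y < \<delta>" using closure_approachable dpos by blast
    then show "y \<in> \<Union> ((\<lambda>u. ball (snd u) \<delta>) ` latt B)" by auto
  qed
  obtain U where U: "U \<subseteq> latt B" "finite U" "K \<subseteq> \<Union> ((\<lambda>u. ball (snd u) \<delta>) ` U)"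
    using compactE_image[OF cK _ cov] by blast
  obtain us where us: "set us = U" using finite_list U(2) by blast
  define n where "n = length us"
  have usL: "us ! i \<in> latt B" if "i < n" for i using that U(1) us n_def nth_mem by blast
  define P where "P i = {z \<in> F0. dist (snd (us!i)) (snd z) < \<delta> \<and> (\<forall>j<i. \<not> dist (snd (us!j)) (snd z) < \<delta>)}" for i
  define \<rho> where "\<rho> = r + (\<Sum>u\<in>U. norm u)"
  have rho0: "\<rho> \<ge> 0" unfolding \<rho>_def using r by (simp add: sum_nonneg)
  have Pcov: "\<exists>i<n. z \<in> P i" if z: "z \<in> F0" for z
  proof -
    have "snd z \<in> snd ` F0" using z by (rule imageI)
    then have "snd z \<in> K" unfolding K_def by (rule closure_subset[THEN subsetD])
    then have "snd z \<in> \<Union> ((\<lambda>u. ball (snd u) \<delta>) ` U)" using U(3) by (rule subsetD[rotated])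
    then obtain u where "u \<in> U" "snd z \<in> ball (snd u) \<delta>" by (rule UN_E)
    then obtain i where "i < n" "dist (snd (us!i)) (snd z) < \<delta>"
      using us n_def by (metis in_set_conv_nth mem_ball)
    then have "\<exists>i. i < n \<and> dist (snd (us!i)) (snd z) < \<delta>" by blast
    then obtain i where i: "i < n \<and> dist (snd (us!i)) (snd z) < \<delta>"
       "\<forall>m<i. \<not> (m < n \<and> dist (snd (us!m)) (snd z) < \<delta>)"
      using exists_least_iff[of "\<lambda>i. i < n \<and> dist (snd (us!i)) (snd z) < \<delta>"] by blast
    then show ?thesis unfolding P_def using z by auto
  qed
  have Pdisj: "i = j" if zi: "z \<in> P i" and zj: "z \<in> P j" for z i j
  proof (rule ccontr)
    assume "i \<noteq> j"
    then consider "i < j" | "j < i" by linarith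
    then show False
    proof cases
      case 1 then show False using zi zj unfolding P_def by blast
    next
      case 2 then show False using zi zj unfolding P_def by blast
    qed
  qed
  have Psub: "P i \<subseteq> F0" for i unfolding P_def by auto
  have Pmeas: "P i \<in> sets lebesgue" for i
  proof -
    define G where "G = ball (snd (us!i)) \<delta> \<inter> (\<Inter>j\<in>{..<i}. - ball (snd (us!j)) \<delta>)"
    have "closed (\<Inter>j\<in>{..<i}. - ball (snd (us!j)) \<delta>)" by (intro closed_INT) auto
    then have gb: "G \<in> sets borel" unfolding G_def by (intro sets.Int borel_open borel_closed) auto
    have ub: "(UNIV :: (real^'d) set) \<in> sets borel" by simp
    have "(UNIV::(real^'d) set) \<times> G \<in> sets (borel \<Otimes>\<^sub>M borel)" by (rule pair_measureI[OF ub gb])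
    then have "(UNIV::(real^'d) set) \<times> G \<in> sets borel" by (simp only: borel_prod)
    then have "(UNIV::(real^'d) set) \<times> G \<in> sets lebesgue" by (simp add: lborelD sets_completionI_sets)
    moreover have "P i = F0 \<inter> ((UNIV::(real^'d) set) \<times> G)" unfolding P_def G_def by (auto simp: mem_Times_iff)
    moreover have "F0 \<in> sets lebesgue" using F0props(1) by (rule fmeasurableD)
    ultimately show ?thesis by simp
  qed
  have Plm: "P i \<in> lmeasurable" for i
    using Pmeas bounded_subset[OF F0props(3) Psub] bounded_set_imp_lmeasurable by blast
  have F0U: "F0 = (\<Union>i\<in>{..<n}. P i)" using Pcov Psub by blast
  have mF0: "measure lebesgue F0 = (\<Sum>i\<in>{..<n}. measure lebesgue (P i))"
    unfolding F0U
  proof (rule measure_finite_Union)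
    show "P ` {..<n} \<subseteq> sets lebesgue" using Pmeas by auto
    show "disjoint_family_on P {..<n}" unfolding disjoint_family_on_def using Pdisj by blast
    show "emeasure lebesgue (P i) \<noteq> \<infinity>" for i unfolding infinity_ennreal_def by (rule fmeasurableD2[OF Plm])
  qed simp
  show ?thesis
  proof (rule that[OF rho0])
    fix R S assume R: "R \<ge> (0::real)" and fS: "finite S"
      and S: "S \<subseteq> {v \<in> latt B. infnorm (fst v) \<le> R \<and> snd v \<in> A}"
    define T where "T p = (+) (fst p - us ! snd p) ` P (snd p)" for p
    define Ad where "Ad = (\<Union>a\<in>A. ball a \<delta>)"
    define c where "c = R + \<rho>"
    define X where "X = cbox (- c *\<^sub>R One) (c *\<^sub>R (One::real^'d)) \<times> Ad"
    have Tlm: "T p \<in> lmeasurable" for p unfolding T_def by (intro measurable_translation Plm)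
    have mT: "measure lebesgue (T p) = measure lebesgue (P (snd p))" for p
      unfolding T_def by (rule measure_translation)
    have Tdisj: "disjoint_family_on T (S \<times> {..<n})"
    proof (unfold disjoint_family_on_def, intro ballI impI)
      fix p q assume p: "p \<in> S \<times> {..<n}" and q: "q \<in> S \<times> {..<n}" and pq: "p \<noteq> q"
      show "T p \<inter> T q = {}"
      proof (rule ccontr)
        assume "T p \<inter> T q \<noteq> {}"
        then obtain x where x1: "x \<in> T p" and x2: "x \<in> T q" by blast
        obtain z where z: "z \<in> P (snd p)" and ez: "x = fst p - us ! snd p + z"
          using x1 unfolding T_def by auto
        obtain z' where z': "z' \<in> P (snd q)" and ez': "x = fst q - us ! snd q + z'"
          using x2 unfolding T_def by auto
        have eq: "fst p - us ! snd p + z = fst q - us ! snd q + z'" using ez ez' by simp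
        have inL: "fst p \<in> latt B" "fst q \<in> latt B" "us ! snd p \<in> latt B" "us ! snd q \<in> latt B"
          using p q S usL by auto
        have "z - z' = (fst q - us ! snd q) - (fst p - us ! snd p)" using eq by (simp add: algebra_simps)
        also have "\<dots> \<in> latt B" using inL by (intro latt_diff) auto
        finally have "z = z'" using fund_par_unique[OF ind] z z' Psub unfolding F0_def by blast
        then have "snd p = snd q" using Pdisj z z' by blast
        moreover have "fst p = fst q" using eq \<open>z = z'\<close> calculation by simp
        ultimately show False using pq by (simp add: prod_eq_iff)
      qed
    qed
    have Tsub: "T p \<subseteq> X" if p: "p \<in> S \<times> {..<n}" for p
    proof
      fix x assume "x \<in> T p"
      then obtain z where z: "z \<in> P (snd p)" and x: "x = fst p - us ! snd p + z" unfolding T_def by auto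
      define v where "v = fst p"
      define u where "u = us ! snd p"
      have v: "infnorm (fst v) \<le> R" "snd v \<in> A" using p S unfolding v_def by auto
      have uU: "u \<in> U" using p us n_def unfolding u_def by auto
      have dz: "dist (snd u) (snd z) < \<delta>" using z unfolding P_def u_def by auto
      have zF: "z \<in> F0" using z Psub by blast
      have fx: "fst x = fst v + fst (z - u)" unfolding x v_def u_def by (simp add: algebra_simps)
      have "infnorm (fst x) \<le> infnorm (fst v) + infnorm (fst (z - u))"
        unfolding fx by (rule infnorm_triangle)
      also have "\<dots> \<le> R + norm (z - u)"
      proof -
        have "norm (fst (z - u)) \<le> norm (z - u)"
          using norm_fst_le[of "fst (z-u)" "snd (z-u)"] by (simp only: prod.collapse)
        then show ?thesis using v(1) infnorm_le_norm[of "fst (z - u)"] by linarith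
      qed
      also have "\<dots> \<le> R + (r + (\<Sum>u\<in>U. norm u))"
      proof -
        have "norm (z - u) \<le> norm z + norm u" by (rule norm_triangle_ineq4)
        moreover have "norm u \<le> (\<Sum>u\<in>U. norm u)" using uU U(2) by (intro member_le_sum) auto
        ultimately show ?thesis using r(2)[OF zF] by linarith
      qed
      finally have inf: "infnorm (fst x) \<le> c" unfolding c_def \<rho>_def .
      have "fst x \<in> cbox (- c *\<^sub>R One) (c *\<^sub>R One)"
        unfolding mem_box
      proof (intro ballI conjI)
        fix i :: "real^'d" assume i: "i \<in> Basis"
        have "\<bar>fst x \<bullet> i\<bar> \<le> c" using Basis_le_infnorm[OF i, of "fst x"] inf by linarith
        then show "(- c *\<^sub>R One) \<bullet> i \<le> fst x \<bullet> i" "fst x \<bullet> i \<le> (c *\<^sub>R One) \<bullet> i"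
          using i by (auto simp: abs_le_iff)
      qed
      moreover have "snd x \<in> Ad"
      proof -
        have "dist (snd v) (snd x) = dist (snd u) (snd z)" unfolding x v_def u_def dist_norm
          by (simp add: algebra_simps)
        then show ?thesis unfolding Ad_def using v(2) dz by (intro UN_I[of "snd v"]) auto
      qed
      ultimately show "x \<in> X" unfolding X_def by (simp add: mem_Times_iff)
    qed
    obtain a where a: "\<And>y. y \<in> A \<Longrightarrow> norm y \<le> a" using bA bounded_iff by blast
    have Adsub: "Ad \<subseteq> ball 0 (a + \<delta>)"
    proof
      fix y assume "y \<in> Ad"
      then obtain w where "w \<in> A" "dist w y < \<delta>" unfolding Ad_def by auto
      then show "y \<in> ball 0 (a + \<delta>)" using a[of w] norm_triangle_ineq2[of y w]
        by (auto simp: dist_norm norm_minus_commute)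
    qed
    have Adb: "Ad \<in> sets borel" unfolding Ad_def by (intro borel_open) auto
    have "emeasure lborel Ad \<le> emeasure lborel (ball (0::real^'h) (a+\<delta>))" using Adsub by (rule emeasure_mono) simp
    then have Adfin: "emeasure lborel Ad < \<infinity>"
      using emeasure_lborel_ball_finite[of "0::real^'h" "a+\<delta>"] by (rule le_less_trans)
    have "cbox (- c *\<^sub>R One) (c *\<^sub>R (One::real^'d)) \<in> sets borel" by (intro borel_closed closed_cbox)
    then have "X \<in> sets (borel \<Otimes>\<^sub>M borel)" unfolding X_def using Adb by (intro pair_measureI)
    then have Xb: "X \<in> sets borel" by (simp only: borel_prod)
    have Xbd: "bounded X" unfolding X_def using Adsub
      by (intro bounded_Times bounded_cbox) (auto intro: bounded_subset)
    have Xlm: "X \<in> lmeasurable"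
    proof (rule bounded_set_imp_lmeasurable[OF Xbd])
      show "X \<in> sets lebesgue" using Xb by (simp add: lborelD sets_completionI_sets)
    qed
    have mX: "measure lebesgue X = (2*c)^CARD('d) * measure lebesgue Ad"
    proof -
      have "measure lebesgue X = measure lebesgue (cbox (- c *\<^sub>R One) (c *\<^sub>R (One::real^'d))) * measure lebesgue Ad"
        unfolding X_def using Adb Adfin by (intro measure_times_borel) (auto simp: emeasure_lborel_cbox_finite[unfolded infinity_ennreal_def] intro: borel_closed)
      moreover have "measure lebesgue (cbox (- c *\<^sub>R One) (c *\<^sub>R (One::real^'d))) = (2*c)^CARD('d)"
      proof -
        have c0: "c \<ge> 0" unfolding c_def using R rho0 by simp
        have "measure lebesgue (cbox (- c *\<^sub>R One) (c *\<^sub>R (One::real^'d)))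
            = measure lborel (cbox (- c *\<^sub>R One) (c *\<^sub>R (One::real^'d)))"
          by (simp add: measure_completion)
        also have "\<dots> = (\<Prod>b\<in>(Basis::(real^'d) set). (c *\<^sub>R One - (- c *\<^sub>R One)) \<bullet> b)"
          using c0 by (subst measure_lborel_cbox) auto
        also have "\<dots> = (\<Prod>b\<in>(Basis::(real^'d) set). 2*c)"
        proof (rule prod.cong[OF refl])
          fix b :: "real^'d" assume b: "b \<in> Basis"
          have "(c *\<^sub>R One - (- c *\<^sub>R One)) \<bullet> b = c * (One \<bullet> b) - (- c) * (One \<bullet> b)"
            by (simp only: inner_diff_left inner_scaleR_left)
          then show "(c *\<^sub>R One - (- c *\<^sub>R One)) \<bullet> b = 2 * c" using b by simp
        qed
        also have "\<dots> = (2*c)^CARD('d)" by (simp add: DIM_cart)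
        finally show ?thesis .
      qed
      ultimately show ?thesis by simp
    qed
    have "measure lebesgue (\<Union>p\<in>S \<times> {..<n}. T p) = (\<Sum>p\<in>S \<times> {..<n}. measure lebesgue (T p))"
    proof (rule measure_finite_Union)
      show "T ` (S \<times> {..<n}) \<subseteq> sets lebesgue" using fmeasurableD[OF Tlm] by blast
      show "emeasure lebesgue (T i) \<noteq> \<infinity>" for i unfolding infinity_ennreal_def by (rule fmeasurableD2[OF Tlm])
    qed (use fS Tdisj in auto)
    also have "\<dots> = (\<Sum>p\<in>S \<times> {..<n}. measure lebesgue (P (snd p)))" by (simp add: mT)
    also have "\<dots> = (\<Sum>(v,i)\<in>S \<times> {..<n}. measure lebesgue (P i))"
      by (intro sum.cong) auto
    also have "\<dots> = (\<Sum>v\<in>S. \<Sum>i\<in>{..<n}. measure lebesgue (P i))"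
      by (rule sum.cartesian_product[symmetric])
    also have "\<dots> = real (card S) * measure lebesgue F0" by (simp add: mF0)
    finally have eqU: "measure lebesgue (\<Union>p\<in>S \<times> {..<n}. T p) = real (card S) * measure lebesgue F0" .
    have "measure lebesgue (\<Union>p\<in>S \<times> {..<n}. T p) \<le> measure lebesgue X"
      using Tsub Xlm fS by (intro measure_mono_fmeasurable) (auto intro!: sets.finite_UN fmeasurableD[OF Tlm])
    then show "real (card S) * measure lebesgue (fund_par B)
        \<le> (2*(R+\<rho>))^CARD('d) * measure lebesgue (\<Union>a\<in>A. ball a \<delta>)"
      using eqU mX unfolding F0_def c_def Ad_def by simp
  qed
qed

theorem lemma3p1:
  fixes \<L> :: "((real^'d::finite) \<times> (real^'h::finite)) set"
    and A :: "nat \<Rightarrow> (real^'h::finite) set"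
  assumes lat: "is_lattice \<L>"
    and inj: "inj_on fst \<L>"
    and dense: "closure (snd ` \<L>) = UNIV"
    and relcpt: "\<And>i. i \<ge> 1 \<Longrightarrow> compact (closure (A i))"
    and meas: "\<And>i. i \<ge> 1 \<Longrightarrow> A i \<in> sets lebesgue"
    and intr: "\<And>i. i \<ge> 1 \<Longrightarrow> interior (A i) \<noteq> {}"
    and bdry: "\<And>i. i \<ge> 1 \<Longrightarrow> frontier (A i) \<in> null_sets lebesgue"
    and decr: "\<And>i. i \<ge> 1 \<Longrightarrow> A (Suc i) \<subseteq> A i"
    and vol0: "(\<lambda>i. measure lebesgue (A i)) \<longlonglongrightarrow> 0"
  shows "(\<exists>Rs :: nat \<Rightarrow> real. \<forall>i\<ge>1. \<forall>R\<ge>Rs i.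
            real (card {l \<in> fst ` \<L>. infnorm l \<le> R \<and> star_map \<L> l \<in> A i})
              \<le> 2 ^ (CARD('d) + 1) * lattice_dens \<L> * measure lebesgue (A i) * R ^ CARD('d))
       \<and> (\<forall>T :: nat \<Rightarrow> real. filterlim T at_top sequentially \<longrightarrow>
            (\<lambda>j. real (card {l \<in> fst ` \<L>. infnorm l \<le> T j \<and> star_map \<L> l \<in> A j}))
              \<in> o(\<lambda>j. T j ^ CARD('d)))"
proof -
  let ?P = "\<lambda>B. independent B \<and> card B = DIM((real^'d) \<times> (real^'h)) \<and>
      \<L> = {(\<Sum>b\<in>B. of_int (c b) *\<^sub>R b) | c. True}"
  define Bs where "Bs = (SOME B. ?P B)"
  have "\<exists>B. ?P B" using lat unfolding is_lattice_def by blast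
  then have Bs: "?P Bs" unfolding Bs_def by (rule someI_ex)
  have Lat: "\<L> = latt Bs" using Bs by (simp add: latt_def)
  have "fund_par Bs \<in> sets borel" using Bs by (intro fund_par_props(4)) auto
  then have fb: "fund_par Bs \<in> sets lborel" by simp
  have "measure lborel (fund_par Bs) = measure lebesgue (fund_par Bs)"
    using fb by (simp add: measure_completion)
  then have densL: "lattice_dens \<L> = 1 / measure lebesgue (fund_par Bs)"
    unfolding lattice_dens_def Bs_def by simp
  have mF: "measure lebesgue (fund_par Bs) > 0" using fund_par_props(2) Bs by blast
  have dense': "closure (snd ` latt Bs) = UNIV" using dense Lat by simp
  define D where "D = lattice_dens \<L>"
  have D0: "D \<ge> 0" unfolding D_def densL using mF by simp
  define m where "m i = measure lebesgue (A i)" for i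
  have m0: "m i \<ge> 0" for i unfolding m_def by simp
  have core: "\<exists>R0. R0 \<ge> 1 \<and> (\<forall>R\<ge>R0. \<forall>Y. Y \<subseteq> {v\<in>\<L>. infnorm (fst v) \<le> R \<and> snd v \<in> A i} \<longrightarrow>
      real (card Y) \<le> 2 ^ (CARD('d) + 1) * D * m i * R ^ CARD('d))" if i: "i \<ge> 1" for i
  proof -
    have bA: "bounded (A i)"
      using relcpt[OF i] compact_imp_bounded bounded_subset closure_subset by blast
    have Alm: "A i \<in> lmeasurable" using bA meas[OF i] bounded_set_imp_lmeasurable by blast
    have mpos: "m i > 0"
    proof -
      obtain y where y: "y \<in> interior (A i)" using intr[OF i] by blast
      have "\<forall>x\<in>interior (A i). \<exists>e>0. ball x e \<subseteq> interior (A i)"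
        using open_contains_ball[THEN iffD1, OF open_interior] .
      then obtain e where e0: "e > 0" "ball y e \<subseteq> interior (A i)" using y by blast
      have e: "e > 0" "ball y e \<subseteq> A i" using e0 interior_subset by (auto intro: order_trans)
      have "0 < measure lborel (ball y e)" using e content_ball_pos by blast
      also have "measure lborel (ball y e) = measure lebesgue (ball y e)"
        by (simp add: measure_completion)
      also have "\<dots> \<le> m i" unfolding m_def using e Alm by (intro measure_mono_fmeasurable) auto
      finally show ?thesis .
    qed
    have mcl: "measure lebesgue (closure (A i)) = m i"
    proof -
      define N where "N = closure (A i) - A i"
      have "closure (A i) \<in> sets lebesgue"
        by (simp add: borel_closed lborelD sets_completionI_sets)
      then have Ns: "N \<in> sets lebesgue" unfolding N_def using meas[OF i] by auto
      have "N \<subseteq> frontier (A i)" unfolding N_def frontier_def using interior_subset by blast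
      then have Nn: "N \<in> null_sets lebesgue" using null_sets_subset[OF bdry[OF i] Ns] by blast
      have "closure (A i) = A i \<union> N" unfolding N_def using closure_subset by blast
      then show ?thesis unfolding m_def using measure_Un_null_set[OF meas[OF i] Nn] by simp
    qed
    obtain a where a: "\<And>y. y \<in> A i \<Longrightarrow> norm y \<le> a" using bA bounded_iff by blast
    define Ad where "Ad n = (\<Union>y\<in>A i. ball y (1 / real (Suc n)))" for n
    have Adsub: "Ad n \<subseteq> ball 0 (a + 1)" for n
    proof
      fix y assume "y \<in> Ad n"
      then obtain w where w: "w \<in> A i" "dist w y < 1 / real (Suc n)" unfolding Ad_def by auto
      have h: "1 / real (Suc n) \<le> 1" by simp
      have d1: "dist w y < 1" using w(2) h by linarith
      have "norm (y - w) < 1" using d1 by (simp add: dist_norm norm_minus_commute)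
      then have "norm y < a + 1" using a[OF w(1)] norm_triangle_ineq2[of y w] by linarith
      then show "y \<in> ball 0 (a + 1)" by simp
    qed
    have Adlm: "Ad n \<in> lmeasurable" for n
    proof (rule lmeasurable_open)
      show "bounded (Ad n)" using Adsub[of n] bounded_ball bounded_subset by blast
      show "open (Ad n)" unfolding Ad_def by (intro open_UN) auto
    qed
    have lim: "(\<lambda>n. measure lebesgue (Ad n)) \<longlonglongrightarrow> measure lebesgue (\<Inter> (range Ad))"
    proof (rule Lim_measure_decseq)
      show "range Ad \<subseteq> sets lebesgue" using Adlm by blast
      show "antimono_on UNIV Ad"
      proof (rule monotone_onI)
        fix r s :: nat assume "r \<in> UNIV" "s \<in> UNIV" and rs: "r \<le> s"
        from rs have "1 / real (Suc s) \<le> 1 / real (Suc r)" by (simp add: frac_le)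
        then show "Ad s \<subseteq> Ad r" unfolding Ad_def by fastforce
      qed
      show "emeasure lebesgue (Ad n) \<noteq> \<infinity>" for n
        unfolding infinity_ennreal_def by (rule fmeasurableD2[OF Adlm])
    qed
    have "\<Inter> (range Ad) = closure (A i)"
    proof
      show "\<Inter> (range Ad) \<subseteq> closure (A i)"
      proof
        fix y assume y: "y \<in> \<Inter> (range Ad)"
        have "\<exists>w\<in>A i. dist w y < e" if e: "e > 0" for e
        proof -
          obtain n where n: "inverse (real (Suc n)) < e" using reals_Archimedean e by blast
          have "y \<in> Ad n" using y by blast
          then obtain w where w: "w \<in> A i" "dist w y < 1 / real (Suc n)" unfolding Ad_def by auto
          have "1 / real (Suc n) < e" using n by (simp add: inverse_eq_divide)
          then have "dist w y < e" using w(2) by linarith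
          then show ?thesis using w(1) by blast
        qed
        then show "y \<in> closure (A i)" using closure_approachable by blast
      qed
    next
      show "closure (A i) \<subseteq> \<Inter> (range Ad)"
      proof
        fix y assume y: "y \<in> closure (A i)"
        have "y \<in> Ad n" for n
        proof -
          have pos: "1 / real (Suc n) > 0" by simp
          obtain w where w: "w \<in> A i" "dist y w < 1 / real (Suc n)"
            using closure_approachableD[OF y pos] by blast
          show ?thesis unfolding Ad_def by (intro UN_I[OF w(1)]) (use w(2) in \<open>simp add: dist_commute\<close>)
        qed
        then show "y \<in> \<Inter> (range Ad)" by blast
      qed
    qed
    then have lim': "(\<lambda>n. measure lebesgue (Ad n)) \<longlonglongrightarrow> m i" using lim mcl by simp
    have "m i < 2 * m i" using mpos by simp
    from order_tendstoD(2)[OF lim' this]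
    have "eventually (\<lambda>n. measure lebesgue (Ad n) < 2 * m i) sequentially" .
    then obtain n0 where "\<forall>n\<ge>n0. measure lebesgue (Ad n) < 2 * m i"
      unfolding eventually_sequentially by blast
    then have n0: "measure lebesgue (Ad n0) < 2 * m i" by simp
    define M where "M = measure lebesgue (Ad n0)"
    have dpos: "1 / real (Suc n0) > 0" by simp
    obtain \<rho> where rho: "\<rho> \<ge> 0" and pack: "\<And>R S. R \<ge> 0 \<Longrightarrow> finite S \<Longrightarrow>
      S \<subseteq> {v \<in> latt Bs. infnorm (fst v) \<le> R \<and> snd v \<in> A i} \<Longrightarrow>
      real (card S) * measure lebesgue (fund_par Bs)
        \<le> (2*(R+\<rho>))^CARD('d) * measure lebesgue (\<Union>a\<in>A i. ball a (1 / real (Suc n0)))"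
      using packing[OF _ _ dense' bA dpos] Bs by blast
    have tl: "((\<lambda>R. (1 + \<rho> / R) ^ CARD('d) * M) \<longlongrightarrow> (1 + 0) ^ CARD('d) * M) at_top"
      by (intro tendsto_intros tendsto_divide_0[OF tendsto_const] filterlim_at_top_imp_at_infinity filterlim_ident)
    have "(1 + 0) ^ CARD('d) * M < 2 * m i" using n0 unfolding M_def by simp
    from order_tendstoD(2)[OF tl this]
    have "eventually (\<lambda>R. (1 + \<rho> / R) ^ CARD('d) * M < 2 * m i) at_top" .
    then obtain R1 where R1': "\<forall>R\<ge>R1. (1 + \<rho> / R) ^ CARD('d) * M < 2 * m i"
      unfolding eventually_at_top_linorder by blast
    have R1: "(1 + \<rho> / R) ^ CARD('d) * M < 2 * m i" if "R \<ge> R1" for R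
      using R1' that by blast
    show ?thesis
    proof (intro exI[of _ "max R1 1"] conjI allI impI)
      fix R Y assume R: "R \<ge> max R1 1" and Y: "Y \<subseteq> {v\<in>\<L>. infnorm (fst v) \<le> R \<and> snd v \<in> A i}"
      have Rp: "R > 0" using R by simp
      have rhs0: "0 \<le> 2 ^ (CARD('d) + 1) * D * m i * R ^ CARD('d)"
        using D0 m0 Rp by simp
      show "real (card Y) \<le> 2 ^ (CARD('d) + 1) * D * m i * R ^ CARD('d)"
      proof (cases "finite Y")
        case False then show ?thesis using rhs0 by simp
      next
        case True
        have pk: "real (card Y) * measure lebesgue (fund_par Bs) \<le> (2*(R+\<rho>))^CARD('d) * M"
          using pack[of R Y] True Y Rp unfolding Lat M_def Ad_def by auto
        have "(1 + \<rho> / R) ^ CARD('d) * M < 2 * m i" using R1 R by simp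
        moreover have "1 + \<rho> / R = (R + \<rho>) / R" using Rp by (simp add: field_simps)
        ultimately have "(R + \<rho>) ^ CARD('d) / R ^ CARD('d) * M < 2 * m i" by (simp add: power_divide)
        then have "(R + \<rho>) ^ CARD('d) * M < 2 * m i * R ^ CARD('d)"
          using Rp by (simp add: field_simps)
        then have lt: "2 ^ CARD('d) * ((R + \<rho>) ^ CARD('d) * M) \<le> 2 ^ CARD('d) * (2 * m i * R ^ CARD('d))"
          by (intro mult_left_mono) auto
        have eq: "(2*(R+\<rho>))^CARD('d) * M = 2 ^ CARD('d) * ((R + \<rho>) ^ CARD('d) * M)"
          by (simp only: power_mult_distrib mult.assoc)
        have "(2*(R+\<rho>))^CARD('d) * M \<le> 2 ^ CARD('d) * (2 * m i * R ^ CARD('d))"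
          using eq lt by (rule ord_eq_le_trans)
        with pk have "real (card Y) * measure lebesgue (fund_par Bs) \<le> 2 ^ (CARD('d) + 1) * m i * R ^ CARD('d)"
          by simp
        then have "real (card Y) \<le> 2 ^ (CARD('d) + 1) * m i * R ^ CARD('d) / measure lebesgue (fund_par Bs)"
          using mF by (simp add: pos_le_divide_eq)
        then show ?thesis unfolding D_def densL by simp
      qed
    qed simp
  qed
  define Q where "Q i R0 \<longleftrightarrow> R0 \<ge> 1 \<and> (\<forall>R\<ge>R0. \<forall>Y. Y \<subseteq> {v\<in>\<L>. infnorm (fst v) \<le> R \<and> snd v \<in> A i} \<longrightarrow>
      real (card Y) \<le> 2 ^ (CARD('d) + 1) * D * m i * R ^ CARD('d))" for i R0
  have "\<forall>i. \<exists>R0. i \<ge> 1 \<longrightarrow> Q i R0"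
    using core unfolding Q_def by blast
  from choice[OF this] obtain Rs where Rs0: "\<forall>i. i \<ge> 1 \<longrightarrow> Q i (Rs i)" by blast
  have Rs: "Rs i \<ge> 1 \<and> (\<forall>R\<ge>Rs i. \<forall>Y. Y \<subseteq> {v\<in>\<L>. infnorm (fst v) \<le> R \<and> snd v \<in> A i} \<longrightarrow>
      real (card Y) \<le> 2 ^ (CARD('d) + 1) * D * m i * R ^ CARD('d))" if "i \<ge> 1" for i
    using Rs0 that unfolding Q_def by blast
  have cnt: "card {l \<in> fst ` \<L>. infnorm l \<le> R \<and> star_map \<L> l \<in> W} = card {v\<in>\<L>. infnorm (fst v) \<le> R \<and> snd v \<in> W}" for R W
    using star_count[OF inj] .
  have part1: "\<forall>i\<ge>1. \<forall>R\<ge>Rs i.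
            real (card {l \<in> fst ` \<L>. infnorm l \<le> R \<and> star_map \<L> l \<in> A i})
              \<le> 2 ^ (CARD('d) + 1) * lattice_dens \<L> * measure lebesgue (A i) * R ^ CARD('d)"
    using Rs unfolding cnt D_def m_def by blast
  have mono: "A j \<subseteq> A i" if "1 \<le> i" "i \<le> j" for i j
    using that(2)
  proof (induction j rule: dec_induct)
    case base then show ?case by simp
  next
    case (step n) then show ?case using decr[of n] that(1) by auto
  qed
  have part2: "(\<lambda>j. real (card {l \<in> fst ` \<L>. infnorm l \<le> T j \<and> star_map \<L> l \<in> A j}))
              \<in> o(\<lambda>j. T j ^ CARD('d))" if T: "filterlim T at_top sequentially" for T :: "nat \<Rightarrow> real"
  proof (rule landau_o.smallI)
    fix c :: real assume c: "c > 0"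
    have "(\<lambda>j. 2 ^ (CARD('d) + 1) * D * m j) \<longlonglongrightarrow> 2 ^ (CARD('d) + 1) * D * 0"
      using vol0 unfolding m_def by (intro tendsto_mult tendsto_const)
    then have "(\<lambda>j. 2 ^ (CARD('d) + 1) * D * m j) \<longlonglongrightarrow> 0" by simp
    from order_tendstoD(2)[OF this c]
    have "eventually (\<lambda>j. 2 ^ (CARD('d) + 1) * D * m j < c) sequentially" .
    then obtain N where N: "\<forall>j\<ge>N. 2 ^ (CARD('d) + 1) * D * m j < c"
      unfolding eventually_sequentially by blast
    define i where "i = max N 1"
    have i1: "i \<ge> 1" and Ki: "2 ^ (CARD('d) + 1) * D * m i < c" using N unfolding i_def by auto
    have ev1: "eventually (\<lambda>j. T j \<ge> Rs i) sequentially" using T filterlim_at_top by blast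
    have ev2: "eventually (\<lambda>j. j \<ge> i) sequentially" by (rule eventually_ge_at_top)
    show "eventually (\<lambda>j. norm (real (card {l \<in> fst ` \<L>. infnorm l \<le> T j \<and> star_map \<L> l \<in> A j}))
        \<le> c * norm (T j ^ CARD('d))) sequentially"
      using ev1 ev2
    proof eventually_elim
      case (elim j)
      have Tj: "T j \<ge> 1" using elim Rs[OF i1] by linarith
      have sub: "{v\<in>\<L>. infnorm (fst v) \<le> T j \<and> snd v \<in> A j} \<subseteq> {v\<in>\<L>. infnorm (fst v) \<le> T j \<and> snd v \<in> A i}"
        using mono[OF i1 elim(2)] by blast
      have "real (card {v\<in>\<L>. infnorm (fst v) \<le> T j \<and> snd v \<in> A j}) \<le> 2 ^ (CARD('d) + 1) * D * m i * T j ^ CARD('d)"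
        using Rs[OF i1] elim(1) sub by blast
      also have "\<dots> \<le> c * T j ^ CARD('d)"
        using Ki Tj by (intro mult_right_mono) auto
      finally show ?case unfolding cnt using Tj by simp
    qed
  qed
  show ?thesis using part1 part2 by blast
qed

end
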